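(* Let $G=(V,E,\omega)$ be a weighted directed graph, let $\lambda_0$ be an eigenvalue of $M_G$, and let $S$ be a $\lambda_0$-structural set of $G$. Let $u^S=(u^S_i)_{i\in S}$ be an eigenvector of the reduced matrix $R_S(G,\lambda_0)$ with eigenvalue $\lambda_0$. Then the recursive relations $$u_i=u^S_i\ \ (i\in S_0=S),\qquad u_\ell=\sum_{j\in S_{k-1}}\frac{\omega(\ell,j)}{\lambda_0-\omega(\ell,\ell)}\,u_j\ \ \text{for all }\ell\in S_k\setminus S_{k-1},\ k\ge 1,$$ uniquely determine a vector $u=(u_i)_{i\in V}$, and $u$ is an eigenvector of $M_G$ associated to $\lambda_0$ whose restriction to $S$ is $u^S$.
   Context: Let $G=(V,E,\omega)$ be a weighted directed graph with vertex set $V=\{1,\dots,n\}$, edge set $E\subset V\times V$ and weight function $\omega:E\to\mathbb{C}$; set $\omega(i,j)=0$ whenever $(i,j)\notin E$. Its weighted adjacency matrix is $M_G=(\omega(i,j))_{i,j\in V}$ (acting on column vectors, so $(M_Gu)_i=\sum_j\omega(i,j)u_j$). A path is a sequence $(i_0,\dots,i_p)$ with $p\ge 1$ and $(i_\ell,i_{\ell+1})\in E$ for $0\le \ell\le p-1$, whose vertices are pairwise distinct except that possibly $i_0=i_p$; if $i_0=i_p$ the path is a cycle, and a cycle with $p=1$ is a loop. For $S\subset V$ write $\overline S=V\setminus S$. Given $\lambda\in\mathbb{C}$, a nonempty set $S\subset V$ is a $\lambda$-structural set of $G$ if (i) every cycle of $G$ that is not a loop contains a vertex of $S$, and (ii)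 $\omega(i,i)\neq\lambda$ for every $i\in\overline S$. A branch of $(G,S)$ is a path $\beta=(i_0,i_1,\dots,i_p)$ whose interior vertices $i_1,\dots,i_{p-1}$ all lie in $\overline S$; $\mathscr B_{ij}$ denotes the set of branches with $i_0=i$ and $i_p=j$. The weight of a branch is $\omega(\beta,\lambda)=\omega(i_0,i_1)\prod_{\ell=1}^{p-1}\frac{\omega(i_\ell,i_{\ell+1})}{\lambda-\omega(i_\ell,i_\ell)}$. For $i,j\in S$ set $R_{ij}(G,S,\lambda)=\sum_{\beta\in\mathscr B_{ij}}\omega(\beta,\lambda)$; the reduced matrix $R_S(G,\lambda)$ is the $S\times S$ matrix with entries $R_{ij}(G,S,\lambda)$, $i,j\in S$. Depth of a vertex (relative to $S$), defined recursively: every $i\in S$ has depth $0$; a vertex $i\in\overline S$ has depth $k\ge1$ iff it has no depth less than $k$ and every $j\neq i$ with $(i,j)\in E$ has depth $<k$. Since $S$ is structural, every vertex has a finite depth. $S_k$ denotes the set of vertices of depth $\le k$. *)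

theory Defs
  imports Complex_Main "Jordan_Normal_Form.Char_Poly"
begin

definition wdigraph :: "nat \<Rightarrow> (nat \<times> nat) set \<Rightarrow> (nat \<Rightarrow> nat \<Rightarrow> complex) \<Rightarrow> bool" where
  "wdigraph n E w \<longleftrightarrow> E \<subseteq> {1..n} \<times> {1..n} \<and> (\<forall>i j. (i, j) \<notin> E \<longrightarrow> w i j = 0)"

text \<open>Weighted adjacency matrix M_G (entry (i,j) of the JNF matrix, 0-based, is w(i+1,j+1)).\<close>
definition adj_mat :: "nat \<Rightarrow> (nat \<Rightarrow> nat \<Rightarrow> complex) \<Rightarrow> complex mat" where
  "adj_mat n w = mat n n (\<lambda>(i, j). w (Suc i) (Suc j))"

definition vec_of_fun :: "nat \<Rightarrow> (nat \<Rightarrow> complex) \<Rightarrow> complex vec" where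
  "vec_of_fun n u = vec n (\<lambda>i. u (Suc i))"

text \<open>A path (i_0,...,i_p), p >= 1, consecutive pairs are edges, vertices pairwise
  distinct except possibly i_0 = i_p.\<close>
definition is_path :: "(nat \<times> nat) set \<Rightarrow> nat list \<Rightarrow> bool" where
  "is_path E xs \<longleftrightarrow> length xs \<ge> 2 \<and> (\<forall>k. Suc k < length xs \<longrightarrow> (xs ! k, xs ! Suc k) \<in> E)
     \<and> distinct (butlast xs) \<and> distinct (tl xs)"

definition is_cycle :: "(nat \<times> nat) set \<Rightarrow> nat list \<Rightarrow> bool" where
  "is_cycle E xs \<longleftrightarrow> is_path E xs \<and> hd xs = last xs"

definition is_loop :: "(nat \<times> nat) set \<Rightarrow> nat list \<Rightarrow> bool" where
  "is_loop E xs \<longleftrightarrow> is_cycle E xs \<and> length xs = 2"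

definition structural_set ::
  "nat \<Rightarrow> (nat \<times> nat) set \<Rightarrow> (nat \<Rightarrow> nat \<Rightarrow> complex) \<Rightarrow> complex \<Rightarrow> nat set \<Rightarrow> bool" where
  "structural_set n E w lam S \<longleftrightarrow> S \<noteq> {} \<and> S \<subseteq> {1..n}
     \<and> (\<forall>xs. is_cycle E xs \<and> \<not> is_loop E xs \<longrightarrow> set xs \<inter> S \<noteq> {})
     \<and> (\<forall>i \<in> {1..n} - S. w i i \<noteq> lam)"

definition is_branch :: "nat \<Rightarrow> (nat \<times> nat) set \<Rightarrow> nat set \<Rightarrow> nat list \<Rightarrow> bool" where
  "is_branch n E S xs \<longleftrightarrow> is_path E xs \<and>
     (\<forall>l. 0 < l \<and> l < length xs - 1 \<longrightarrow> xs ! l \<in> {1..n} - S)"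

definition branches :: "nat \<Rightarrow> (nat \<times> nat) set \<Rightarrow> nat set \<Rightarrow> nat \<Rightarrow> nat \<Rightarrow> nat list set" where
  "branches n E S i j = {xs. is_branch n E S xs \<and> hd xs = i \<and> last xs = j}"

definition branch_weight :: "(nat \<Rightarrow> nat \<Rightarrow> complex) \<Rightarrow> complex \<Rightarrow> nat list \<Rightarrow> complex" where
  "branch_weight w lam xs = w (xs ! 0) (xs ! 1) *
     (\<Prod>l\<in>{1..<length xs - 1}. w (xs ! l) (xs ! Suc l) / (lam - w (xs ! l) (xs ! l)))"

definition reduced_entry ::
  "nat \<Rightarrow> (nat \<times> nat) set \<Rightarrow> (nat \<Rightarrow> nat \<Rightarrow> complex) \<Rightarrow> nat set \<Rightarrow> complex \<Rightarrow> nat \<Rightarrow> nat \<Rightarrow> complex" where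
  "reduced_entry n E w S lam i j = (\<Sum>xs\<in>branches n E S i j. branch_weight w lam xs)"

definition eigvec_on :: "nat set \<Rightarrow> (nat \<Rightarrow> nat \<Rightarrow> complex) \<Rightarrow> complex \<Rightarrow> (nat \<Rightarrow> complex) \<Rightarrow> bool" where
  "eigvec_on S R lam u \<longleftrightarrow> (\<forall>i\<in>S. (\<Sum>j\<in>S. R i j * u j) = lam * u i) \<and> (\<exists>i\<in>S. u i \<noteq> 0)"

fun depth_set :: "nat \<Rightarrow> (nat \<times> nat) set \<Rightarrow> nat set \<Rightarrow> nat \<Rightarrow> nat set" where
  "depth_set n E S 0 = S"
| "depth_set n E S (Suc k) = S \<union>
     {i \<in> {1..n}. \<forall>j. j \<noteq> i \<and> (i, j) \<in> E \<longrightarrow> j \<in> depth_set n E S k}"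

definition rec_rel ::
  "nat \<Rightarrow> (nat \<times> nat) set \<Rightarrow> (nat \<Rightarrow> nat \<Rightarrow> complex) \<Rightarrow> nat set \<Rightarrow> complex
   \<Rightarrow> (nat \<Rightarrow> complex) \<Rightarrow> (nat \<Rightarrow> complex) \<Rightarrow> bool" where
  "rec_rel n E w S lam uS u \<longleftrightarrow> (\<forall>i\<in>S. u i = uS i) \<and>
     (\<forall>k\<ge>1. \<forall>l \<in> depth_set n E S k - depth_set n E S (k - 1).
        u l = (\<Sum>j\<in>depth_set n E S (k - 1). w l j / (lam - w l l) * u j))"

end

theory Submission
  imports Defs "HOL-Library.Transitive_Closure_Table"
begin

lemma succ_nth: "successively P xs \<Longrightarrow> Suc k < length xs \<Longrightarrow> P (xs ! k) (xs ! Suc k)"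
proof (induction P xs arbitrary: k rule: successively.induct)
  case (3 P x y xs)
  then show ?case by (cases k) auto
qed auto

lemma nth_succ: "(\<forall>k. Suc k < length xs \<longrightarrow> P (xs ! k) (xs ! Suc k)) \<Longrightarrow> successively P xs"
proof (induction P xs rule: successively.induct)
  case (3 P x y xs)
  have "P x y" using "3.prems"[rule_format, of 0] by simp
  moreover have "successively P (y # xs)"
    using "3.IH" "3.prems" by (metis Suc_less_eq length_Cons nth_Cons_Suc)
  ultimately show ?case by simp
qed auto

lemma hd_in_butlast: "butlast ys \<noteq> [] \<Longrightarrow> hd ys \<in> set (butlast ys)"
  by (cases ys) auto

lemma in_butlast_ne: "x \<in> set xs \<Longrightarrow> x \<noteq> last xs \<Longrightarrow> x \<in> set (butlast xs)"
  by (induction xs) (auto split: if_splits)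

lemma butlast_nil: "ys \<noteq> [] \<Longrightarrow> butlast ys = [] \<Longrightarrow> ys = [hd ys]"
  by (cases ys) (simp_all split: if_splits)

lemma rtrancl_path_succ: "rtrancl_path R x ys z \<Longrightarrow> successively R (x # ys) \<and> last (x # ys) = z"
  by (induction rule: rtrancl_path.induct) auto

fun tw :: "(nat \<Rightarrow> nat \<Rightarrow> complex) \<Rightarrow> complex \<Rightarrow> nat list \<Rightarrow> complex" where
  "tw w lam (a # b # rest) = w a b / (lam - w a a) * tw w lam (b # rest)"
| "tw w lam _ = 1"

lemma tw_cons: "ys \<noteq> [] \<Longrightarrow> tw w lam (a # ys) = w a (hd ys) / (lam - w a a) * tw w lam ys"
  by (cases ys) auto

lemma tw_prod: "tw w lam ys = (\<Prod>l\<in>{0..<length ys - 1}. w (ys ! l) (ys ! Suc l) / (lam - w (ys ! l) (ys ! l)))"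
proof (induction w lam ys rule: tw.induct)
  case (1 w lam a b rest)
  show ?case
    unfolding tw.simps 1
    by (simp add: prod.atLeast0_lessThan_Suc_shift del: prod.op_ivl_Suc)
qed auto

lemma bw_cons: assumes "ys \<noteq> []"
  shows "branch_weight w lam (i # ys) = w i (hd ys) * tw w lam ys"
proof -
  have "{1..<length (i # ys) - 1} = {Suc 0..<Suc (length ys - 1)}" using assms by auto
  then have "(\<Prod>l\<in>{1..<length (i # ys) - 1}. w ((i # ys) ! l) ((i # ys) ! Suc l) / (lam - w ((i # ys) ! l) ((i # ys) ! l)))
     = (\<Prod>l\<in>{0..<length ys - 1}. w (ys ! l) (ys ! Suc l) / (lam - w (ys ! l) (ys ! l)))"
    by (simp only: prod.shift_bounds_Suc_ivl) simp
  moreover have "(i # ys) ! 1 = hd ys" using assms by (simp add: hd_conv_nth)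
  ultimately show ?thesis unfolding branch_weight_def tw_prod by simp
qed

lemma sum_cons_union:
  assumes "finite M" "\<And>m. m \<in> M \<Longrightarrow> finite (A m)"
    "\<And>m ys. m \<in> M \<Longrightarrow> ys \<in> A m \<Longrightarrow> hd ys = m"
  shows "sum f ((\<lambda>ys. a # ys) ` (\<Union>m\<in>M. A m)) = (\<Sum>m\<in>M. \<Sum>ys\<in>A m. f (a # ys))"
proof -
  have "sum f ((\<lambda>ys. a # ys) ` (\<Union>m\<in>M. A m)) = (\<Sum>ys\<in>(\<Union>m\<in>M. A m). f (a # ys))"
    by (subst sum.reindex) (auto simp: inj_on_def)
  also have "\<dots> = (\<Sum>m\<in>M. \<Sum>ys\<in>A m. f (a # ys))"
  proof (rule sum.UNION_disjoint)
    show "\<forall>i\<in>M. \<forall>j\<in>M. i \<noteq> j \<longrightarrow> A i \<inter> A j = {}"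
    proof (intro ballI impI)
      fix i j assume ij: "i \<in> M" "j \<in> M" "i \<noteq> j"
      show "A i \<inter> A j = {}" using assms(3)[OF ij(1)] assms(3)[OF ij(2)] ij(3) by blast
    qed
  qed (use assms in auto)
  finally show ?thesis .
qed

locale setting =
  fixes n :: nat and E :: "(nat \<times> nat) set" and w :: "nat \<Rightarrow> nat \<Rightarrow> complex"
    and lam :: complex and S :: "nat set"
  assumes EV: "E \<subseteq> {1..n} \<times> {1..n}"
    and w0: "\<And>i j. (i, j) \<notin> E \<Longrightarrow> w i j = 0"
    and SV: "S \<subseteq> {1..n}"
    and cyc: "\<And>xs. is_cycle E xs \<Longrightarrow> \<not> is_loop E xs \<Longrightarrow> set xs \<inter> S \<noteq> {}"
    and diag: "\<And>i. i \<in> {1..n} - S \<Longrightarrow> w i i \<noteq> lam"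
begin

abbreviation "V \<equiv> {1..n}"

lemma w0': "w a b \<noteq> 0 \<Longrightarrow> (a, b) \<in> E"
  using w0 by blast

definition "r = {(l, m). l \<in> V - S \<and> m \<in> V - S \<and> l \<noteq> m \<and> (l, m) \<in> E}"

lemma finite_r: "finite r"
  by (rule finite_subset[of _ "V \<times> V"]) (auto simp: r_def)

lemma acyc: "acyclic r"
  unfolding acyclic_def
proof (intro allI notI)
  fix x assume "(x, x) \<in> r\<^sup>+"
  then obtain m where xm: "(x, m) \<in> r" and "(m, x) \<in> r\<^sup>*"
    by (meson tranclD)
  then have "(\<lambda>a b. (a, b) \<in> r)\<^sup>*\<^sup>* m x" by (simp add: rtrancl_def)
  then obtain ys0 where "rtrancl_path (\<lambda>a b. (a, b) \<in> r) m ys0 x"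
    using rtranclp_eq_rtrancl_path by metis
  then obtain ys where p: "rtrancl_path (\<lambda>a b. (a, b) \<in> r) m ys x" and d: "distinct (m # ys)"
    using rtrancl_path_distinct by metis
  have sc: "successively (\<lambda>a b. (a, b) \<in> r) (m # ys)" and la: "last (m # ys) = x"
    using rtrancl_path_succ[OF p] by auto
  have "ys \<noteq> []" using xm la by (auto simp: r_def)
  define cy where "cy = x # m # ys"
  have sc2: "successively (\<lambda>a b. (a, b) \<in> r) cy" using sc xm by (simp add: cy_def)
  have setr: "set cy \<subseteq> V - S"
  proof -
    have "\<And>k. Suc k < length cy \<Longrightarrow> cy ! k \<in> V - S \<and> cy ! Suc k \<in> V - S"
      using succ_nth[OF sc2] by (auto simp: r_def)
    then show ?thesis
      by (auto simp: in_set_conv_nth cy_def) (metis less_Suc_eq_0_disj nth_Cons_0 nth_Cons_Suc)+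
  qed
  have "is_cycle E cy"
    unfolding is_cycle_def is_path_def
  proof (intro conjI allI impI)
    show "2 \<le> length cy" by (simp add: cy_def)
    fix k assume "Suc k < length cy"
    then show "(cy ! k, cy ! Suc k) \<in> E" using succ_nth[OF sc2] by (auto simp: r_def)
  next
    have "x \<notin> set (butlast (m # ys))"
      using d la \<open>ys \<noteq> []\<close> by (metis append_butlast_last_id distinct_append distinct.simps(2) last_ConsR list.distinct(1) butlast.simps(2) not_distinct_conv_prefix)
    then show "distinct (butlast cy)" using d \<open>ys \<noteq> []\<close> by (auto simp: cy_def distinct_butlast dest: in_set_butlastD)
    show "distinct (tl cy)" using d by (simp add: cy_def)
    show "hd cy = last cy" using la \<open>ys \<noteq> []\<close> by (simp add: cy_def)
  qed
  moreover have "\<not> is_loop E cy" using \<open>ys \<noteq> []\<close> by (simp add: is_loop_def cy_def)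
  ultimately show False using cyc setr by blast
qed

lemma wf_r: "wf (r\<inverse>)"
  using finite_acyclic_wf_converse[OF finite_r acyc] .

definition "Tails l j = {ys. ys \<noteq> [] \<and> hd ys = l \<and> last ys = j \<and> successively (\<lambda>a b. (a, b) \<in> E) ys
   \<and> distinct ys \<and> set (butlast ys) \<subseteq> V - S}"

lemma Tails_set: assumes "ys \<in> Tails l j" shows "set ys \<subseteq> insert l V"
proof
  fix y assume "y \<in> set ys"
  then obtain k where k: "k < length ys" "y = ys ! k" by (auto simp: in_set_conv_nth)
  show "y \<in> insert l V"
  proof (cases k)
    case 0 then have "y = hd ys" using assms k by (auto simp: Tails_def hd_conv_nth[symmetric])
    then show ?thesis using assms by (simp add: Tails_def)
  next
    case (Suc k')
    then have "(ys ! k', ys ! Suc k') \<in> E" using assms k succ_nth by (fastforce simp: Tails_def)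
    then show ?thesis using EV k Suc by auto
  qed
qed

lemma finite_Tails: "finite (Tails l j)"
proof (rule finite_subset)
  show "Tails l j \<subseteq> {ys. set ys \<subseteq> insert l V \<and> distinct ys}"
    using Tails_set by (auto simp: Tails_def)
  show "finite {ys. set ys \<subseteq> insert l V \<and> distinct ys}" by (rule finite_subset_distinct) simp
qed

lemma reach: "ys \<noteq> [] \<Longrightarrow> successively (\<lambda>a b. (a, b) \<in> E) ys \<Longrightarrow> distinct ys \<Longrightarrow> set (butlast ys) \<subseteq> V - S
  \<Longrightarrow> z \<in> set (butlast ys) \<Longrightarrow> (hd ys, z) \<in> r\<^sup>*"
proof (induction ys)
  case (Cons a ys)
  show ?case
  proof (cases "z = a")
    case False
    then have ne: "ys \<noteq> []" and z: "z \<in> set (butlast ys)" using Cons.prems by (auto split: if_splits)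
    have "butlast ys \<noteq> []" using z by auto
    then have h: "hd ys \<in> set (butlast ys)" using hd_in_butlast by blast
    have "(hd ys, z) \<in> r\<^sup>*"
      using Cons.IH ne Cons.prems z by (auto simp: successively_Cons)
    moreover have "(a, hd ys) \<in> r"
      using Cons.prems ne h unfolding r_def
      by (auto simp: successively_Cons)
    ultimately show ?thesis by (simp add: converse_rtrancl_into_rtrancl)
  qed simp
qed simp

lemma Tails_S: assumes "m \<in> S" shows "Tails m j = (if m = j then {[m]} else {})"
proof -
  have A: "ys = [m] \<and> j = m" if "ys \<in> Tails m j" for ys
  proof -
    have ne: "ys \<noteq> []" and h: "hd ys = m" and l: "last ys = j" and b: "set (butlast ys) \<subseteq> V - S"
      using that by (simp_all add: Tails_def)
    have "butlast ys = []"
    proof (rule ccontr)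
      assume "butlast ys \<noteq> []"
      then have "hd ys \<in> set (butlast ys)" by (rule hd_in_butlast)
      then have "m \<in> V - S" using b h by auto
      then show False using assms by simp
    qed
    then have "ys = [m]" using ne h by (metis butlast_nil)
    then show ?thesis using l by simp
  qed
  have M: "[m] \<in> Tails m m" by (simp add: Tails_def)
  show ?thesis
  proof (cases "m = j")
    case True
    have "Tails m j = {[m]}"
    proof (rule Set.set_eqI)
      fix ys show "ys \<in> Tails m j \<longleftrightarrow> ys \<in> {[m]}"
        using A[of ys] M True by auto
    qed
    then show ?thesis using True by simp
  next
    case False
    have "Tails m j = {}"
    proof (rule Set.set_eqI)
      fix ys show "ys \<in> Tails m j \<longleftrightarrow> ys \<in> {}"
        using A[of ys] False by auto
    qed
    then show ?thesis using False by simp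
  qed
qed

lemma Tails_step:
  assumes l: "l \<in> V - S" and j: "j \<in> S"
  shows "Tails l j = (\<lambda>ys. l # ys) ` (\<Union>m\<in>{m\<in>V. m \<noteq> l \<and> (l, m) \<in> E}. Tails m j)"
proof (intro equalityI subsetI)
  fix ys assume ys: "ys \<in> Tails l j"
  have ne: "ys \<noteq> []" and h: "hd ys = l" and la: "last ys = j"
    and sc: "successively (\<lambda>a b. (a, b) \<in> E) ys" and d: "distinct ys"
    and b: "set (butlast ys) \<subseteq> V - S"
    using ys unfolding Tails_def by blast+
  obtain ys' where ys': "ys = l # ys'" using ne h by (cases ys) auto
  have ne': "ys' \<noteq> []"
  proof
    assume "ys' = []"
    then have "j = l" using la ys' by simp
    then show False using l j by blast
  qed
  have E1: "(l, hd ys') \<in> E" using sc ys' ne' by (simp add: successively_Cons)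
  have D1: "l \<noteq> hd ys'" using d ys' ne' by (metis distinct.simps(2) list.set_sel(1))
  have T: "ys' \<in> Tails (hd ys') j"
    unfolding Tails_def
  proof (intro CollectI conjI)
    show "last ys' = j" using la ys' ne' by simp
    show "successively (\<lambda>a b. (a, b) \<in> E) ys'" using sc ys' ne' by (simp add: successively_Cons)
    show "distinct ys'" using d ys' by simp
    have "set (butlast ys') \<subseteq> set (butlast ys)" using ys' ne' by (simp add: subset_insertI)
    then show "set (butlast ys') \<subseteq> V - S" using b by blast
  qed (use ne' in auto)
  have "hd ys' \<in> V" using E1 EV by auto
  then show "ys \<in> (\<lambda>ys. l # ys) ` (\<Union>m\<in>{m\<in>V. m \<noteq> l \<and> (l, m) \<in> E}. Tails m j)"
    unfolding ys' using E1 D1 T by blast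
next
  fix ys assume "ys \<in> (\<lambda>ys. l # ys) ` (\<Union>m\<in>{m\<in>V. m \<noteq> l \<and> (l, m) \<in> E}. Tails m j)"
  then obtain m ys' where ys: "ys = l # ys'" and m: "m \<in> V" "m \<noteq> l" "(l, m) \<in> E"
    and ys': "ys' \<in> Tails m j" by auto
  have "l \<notin> set ys'"
  proof
    assume "l \<in> set ys'"
    moreover have "l \<noteq> last ys'" using ys' l j by (auto simp: Tails_def)
    ultimately have lb: "l \<in> set (butlast ys')"
      by (rule in_butlast_ne)
    then have "butlast ys' \<noteq> []" by auto
    then have "m \<in> set (butlast ys')" using ys' hd_in_butlast[of ys'] by (simp add: Tails_def)
    then have "m \<in> V - S" using ys' by (auto simp: Tails_def)
    then have "(l, m) \<in> r" using l m by (auto simp: r_def)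
    moreover have "(m, l) \<in> r\<^sup>*" using reach[of ys' l] ys' lb by (auto simp: Tails_def)
    ultimately have "(l, l) \<in> r\<^sup>+" by (meson rtrancl_into_trancl2)
    then show False using acyc by (auto simp: acyclic_def)
  qed
  moreover have "ys' \<noteq> []" "hd ys' = m" "last ys' = j" "successively (\<lambda>a b. (a, b) \<in> E) ys'"
    "distinct ys'" "set (butlast ys') \<subseteq> V - S" using ys' by (simp_all add: Tails_def)
  ultimately show "ys \<in> Tails l j" unfolding ys Tails_def using m l
    by (simp add: successively_Cons)
qed

definition "T l j = (\<Sum>ys\<in>Tails l j. tw w lam ys)"

lemma T_S: "m \<in> S \<Longrightarrow> T m j = (if m = j then 1 else 0)"
  by (simp add: T_def Tails_S)

lemma T_step:
  assumes l: "l \<in> V - S" and j: "j \<in> S"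
  shows "T l j = (\<Sum>m\<in>V - {l}. w l m / (lam - w l l) * T m j)"
proof -
  let ?M = "{m\<in>V. m \<noteq> l \<and> (l, m) \<in> E}"
  have "T l j = (\<Sum>m\<in>?M. \<Sum>ys\<in>Tails m j. tw w lam (l # ys))"
    unfolding T_def Tails_step[OF l j]
    by (rule sum_cons_union[OF _ finite_Tails]) (auto simp: Tails_def)
  also have "\<dots> = (\<Sum>m\<in>?M. w l m / (lam - w l l) * T m j)"
  proof (rule sum.cong[OF refl])
    fix m assume "m \<in> ?M"
    have "(\<Sum>ys\<in>Tails m j. tw w lam (l # ys)) = (\<Sum>ys\<in>Tails m j. w l m / (lam - w l l) * tw w lam ys)"
      by (rule sum.cong[OF refl]) (auto simp: Tails_def tw_cons)
    then show "(\<Sum>ys\<in>Tails m j. tw w lam (l # ys)) = w l m / (lam - w l l) * T m j"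
      by (simp add: T_def sum_distrib_left)
  qed
  also have "\<dots> = (\<Sum>m\<in>V - {l}. w l m / (lam - w l l) * T m j)"
    by (rule sum.mono_neutral_left) (auto intro: w0')
  finally show ?thesis .
qed

lemma branches_eq:
  assumes i: "i \<in> S" and j: "j \<in> S"
  shows "branches n E S i j = (\<lambda>ys. i # ys) ` (\<Union>m\<in>{m\<in>V. (i, m) \<in> E}. Tails m j)"
proof (intro equalityI subsetI)
  fix xs assume "xs \<in> branches n E S i j"
  then have p: "is_path E xs" and int: "\<And>l. 0 < l \<Longrightarrow> l < length xs - 1 \<Longrightarrow> xs ! l \<in> V - S"
    and h: "hd xs = i" and la: "last xs = j"
    by (auto simp: branches_def is_branch_def)
  have len: "length xs \<ge> 2" and ed: "\<And>k. Suc k < length xs \<Longrightarrow> (xs ! k, xs ! Suc k) \<in> E"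
    and dt: "distinct (tl xs)" using p by (auto simp: is_path_def)
  obtain ys where xs: "xs = i # ys" using h len by (cases xs) auto
  have ne: "ys \<noteq> []" using len xs by auto
  have sc: "successively (\<lambda>a b. (a, b) \<in> E) xs" by (rule nth_succ) (use ed in blast)
  have E1: "(i, hd ys) \<in> E" using sc xs ne by (simp add: successively_Cons)
  have T: "ys \<in> Tails (hd ys) j"
    unfolding Tails_def
  proof (intro CollectI conjI)
    show "last ys = j" using la xs ne by simp
    show "successively (\<lambda>a b. (a, b) \<in> E) ys" using sc xs ne by (simp add: successively_Cons)
    show "distinct ys" using dt xs by simp
    show "set (butlast ys) \<subseteq> V - S"
    proof
      fix y assume "y \<in> set (butlast ys)"
      then obtain k where k: "k < length (butlast ys)" "y = butlast ys ! k" by (auto simp: in_set_conv_nth)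
      then have "y = xs ! Suc k" using xs by (simp add: nth_butlast)
      moreover have "Suc k < length xs - 1" using k xs by simp
      ultimately show "y \<in> V - S" using int by blast
    qed
  qed (use ne in auto)
  have "hd ys \<in> V" using E1 EV by auto
  then show "xs \<in> (\<lambda>ys. i # ys) ` (\<Union>m\<in>{m\<in>V. (i, m) \<in> E}. Tails m j)"
    unfolding xs using E1 T by blast
next
  fix xs assume "xs \<in> (\<lambda>ys. i # ys) ` (\<Union>m\<in>{m\<in>V. (i, m) \<in> E}. Tails m j)"
  then obtain m ys where xs: "xs = i # ys" and m: "(i, m) \<in> E" and ys: "ys \<in> Tails m j" by auto
  have ne: "ys \<noteq> []" and h: "hd ys = m" and la: "last ys = j"
    and sc: "successively (\<lambda>a b. (a, b) \<in> E) ys" and d: "distinct ys"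
    and b: "set (butlast ys) \<subseteq> V - S"
    using ys by (simp_all add: Tails_def)
  have sc2: "successively (\<lambda>a b. (a, b) \<in> E) xs" using sc m h ne xs by (simp add: successively_Cons)
  have "i \<notin> set (butlast ys)" using b i by blast
  then have db: "distinct (butlast xs)" using d ne xs by (simp add: distinct_butlast)
  have "is_path E xs" unfolding is_path_def
    using xs ne succ_nth[OF sc2] db d by (auto simp: Suc_le_eq)
  moreover have "xs ! l \<in> V - S" if l0: "0 < l" and l1: "l < length xs - 1" for l
  proof -
    obtain k where k: "l = Suc k" using l0 by (cases l) auto
    have "xs ! l = butlast ys ! k" using k l1 xs by (simp add: nth_butlast)
    moreover have "k < length (butlast ys)" using k l1 xs by simp
    ultimately show ?thesis using b by (metis nth_mem subsetD)
  qed
  ultimately show "xs \<in> branches n E S i j"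
    using xs la ne by (simp add: branches_def is_branch_def)
qed

lemma finite_S: "finite S"
  using SV finite_subset by blast

lemma R_eq:
  assumes i: "i \<in> S" and j: "j \<in> S"
  shows "reduced_entry n E w S lam i j = (\<Sum>m\<in>V. w i m * T m j)"
proof -
  let ?M = "{m\<in>V. (i, m) \<in> E}"
  have "reduced_entry n E w S lam i j = (\<Sum>m\<in>?M. \<Sum>ys\<in>Tails m j. branch_weight w lam (i # ys))"
    unfolding reduced_entry_def branches_eq[OF i j]
    by (rule sum_cons_union[OF _ finite_Tails]) (auto simp: Tails_def)
  also have "\<dots> = (\<Sum>m\<in>?M. w i m * T m j)"
  proof (rule sum.cong[OF refl])
    fix m assume "m \<in> ?M"
    have "(\<Sum>ys\<in>Tails m j. branch_weight w lam (i # ys)) = (\<Sum>ys\<in>Tails m j. w i m * tw w lam ys)"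
      by (rule sum.cong[OF refl]) (auto simp: Tails_def bw_cons)
    then show "(\<Sum>ys\<in>Tails m j. branch_weight w lam (i # ys)) = w i m * T m j"
      by (simp add: T_def sum_distrib_left)
  qed
  also have "\<dots> = (\<Sum>m\<in>V. w i m * T m j)"
    by (rule sum.mono_neutral_left) (auto intro: w0')
  finally show ?thesis .
qed

definition "U uS l = (\<Sum>j\<in>S. T l j * uS j)"

lemma U_S: "l \<in> S \<Longrightarrow> U uS l = uS l"
proof -
  assume l: "l \<in> S"
  have "U uS l = (\<Sum>j\<in>S. (if l = j then uS j else 0))"
    unfolding U_def by (rule sum.cong[OF refl]) (simp add: T_S[OF l])
  also have "\<dots> = uS l" using l finite_S by (simp add: sum.delta)
  finally show ?thesis .
qed

lemma U_step: "l \<in> V - S \<Longrightarrow> U uS l = (\<Sum>m\<in>V - {l}. w l m / (lam - w l l) * U uS m)"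
proof -
  assume l: "l \<in> V - S"
  have "U uS l = (\<Sum>j\<in>S. \<Sum>m\<in>V - {l}. w l m / (lam - w l l) * T m j * uS j)"
    unfolding U_def by (rule sum.cong[OF refl]) (simp add: T_step[OF l] sum_distrib_right)
  also have "\<dots> = (\<Sum>m\<in>V - {l}. \<Sum>j\<in>S. w l m / (lam - w l l) * T m j * uS j)"
    by (rule sum.swap)
  also have "\<dots> = (\<Sum>m\<in>V - {l}. w l m / (lam - w l l) * U uS m)"
    unfolding U_def by (simp add: sum_distrib_left mult.assoc)
  finally show ?thesis .
qed

lemma U_R: "i \<in> S \<Longrightarrow> (\<Sum>j\<in>S. reduced_entry n E w S lam i j * uS j) = (\<Sum>m\<in>V. w i m * U uS m)"
proof -
  assume i: "i \<in> S"
  have "(\<Sum>j\<in>S. reduced_entry n E w S lam i j * uS j) = (\<Sum>j\<in>S. \<Sum>m\<in>V. w i m * T m j * uS j)"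
    by (rule sum.cong[OF refl]) (simp add: R_eq[OF i] sum_distrib_right)
  also have "\<dots> = (\<Sum>m\<in>V. \<Sum>j\<in>S. w i m * T m j * uS j)" by (rule sum.swap)
  also have "\<dots> = (\<Sum>m\<in>V. w i m * U uS m)"
    unfolding U_def by (simp add: sum_distrib_left mult.assoc)
  finally show ?thesis .
qed

abbreviation "D k \<equiv> depth_set n E S k"

lemma D_V: "D k \<subseteq> V"
  using SV by (cases k) auto

lemma D_Suc: "D k \<subseteq> D (Suc k)"
proof (induction k)
  case 0 then show ?case by simp
next
  case (Suc k)
  then show ?case by (simp only: depth_set.simps) blast
qed

lemma D_mono: "k \<le> k' \<Longrightarrow> D k \<subseteq> D k'"
  using lift_Suc_mono_le[of D, OF D_Suc] by blast

lemma S_D: "S \<subseteq> D k"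
  by (cases k) auto

lemma finite_depth: "l \<in> V \<Longrightarrow> \<exists>k. l \<in> D k"
proof (induction l rule: wf_induct[OF wf_r])
  case (1 l)
  show ?case
  proof (cases "l \<in> S")
    case True then show ?thesis by (metis depth_set.simps(1))
  next
    case False
    let ?N = "{m. m \<noteq> l \<and> (l, m) \<in> E}"
    have fin: "finite ?N" by (rule finite_subset[of _ V]) (use EV in auto)
    have ex: "\<exists>k. m \<in> D k" if "m \<in> ?N" for m
    proof (cases "m \<in> S")
      case True then show ?thesis by (metis depth_set.simps(1))
    next
      case False
      have mV: "m \<in> V" using that EV by auto
      then have "(l, m) \<in> r" using that False \<open>l \<notin> S\<close> 1(2) by (auto simp: r_def)
      then show ?thesis using 1(1) mV by auto
    qed
    define kf where "kf m = (SOME k. m \<in> D k)" for m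
    define K where "K = Max (insert 0 (kf ` ?N))"
    have "m \<in> D K" if "m \<in> ?N" for m
    proof -
      have "m \<in> D (kf m)" unfolding kf_def using ex[OF that] by (rule someI_ex)
      moreover have "kf m \<le> K" unfolding K_def using fin that by (intro Max_ge) auto
      ultimately show ?thesis using D_mono by blast
    qed
    then have "l \<in> D (Suc K)" using 1(2) by auto
    then show ?thesis by blast
  qed
qed

lemma D_layer:
  assumes k: "k \<ge> 1" and l: "l \<in> D k - D (k - 1)"
  shows "l \<in> V - S" and "\<And>f. (\<Sum>j\<in>D (k - 1). w l j / (lam - w l l) * f j) = (\<Sum>m\<in>V - {l}. w l m / (lam - w l l) * f m)"
proof -
  obtain k' where k': "k = Suc k'" using k by (cases k) auto
  have nS: "l \<notin> S" using l S_D by blast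
  then have lV: "l \<in> V" and nb: "\<And>m. m \<noteq> l \<Longrightarrow> (l, m) \<in> E \<Longrightarrow> m \<in> D k'"
    using l k' by auto
  show "l \<in> V - S" using lV nS by simp
  fix f
  show "(\<Sum>j\<in>D (k - 1). w l j / (lam - w l l) * f j) = (\<Sum>m\<in>V - {l}. w l m / (lam - w l l) * f m)"
  proof (rule sum.mono_neutral_left)
    show "finite (V - {l})" by simp
    show "D (k - 1) \<subseteq> V - {l}" using D_V l by blast
    show "\<forall>i\<in>V - {l} - D (k - 1). w l i / (lam - w l l) * f i = 0"
      using nb k' w0 by auto
  qed
qed

lemma full_rec:
  assumes rr: "rec_rel n E w S lam uS u" and l: "l \<in> V - S"
  shows "u l = (\<Sum>m\<in>V - {l}. w l m / (lam - w l l) * u m)"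
proof -
  obtain k where k: "l \<in> D k" using finite_depth l by blast
  define k0 where "k0 = (LEAST k. l \<in> D k)"
  have k0: "l \<in> D k0" unfolding k0_def using k by (rule LeastI)
  have "k0 \<noteq> 0"
  proof
    assume "k0 = 0"
    then have "l \<in> S" using k0 by simp
    then show False using l by blast
  qed
  then have k1: "k0 \<ge> 1" by simp
  have "l \<notin> D (k0 - 1)"
  proof
    assume "l \<in> D (k0 - 1)"
    then have "k0 \<le> k0 - 1" unfolding k0_def by (rule Least_le)
    then show False using k1 by simp
  qed
  then have lay: "l \<in> D k0 - D (k0 - 1)" using k0 by blast
  have "u l = (\<Sum>j\<in>D (k0 - 1). w l j / (lam - w l l) * u j)"
    using rr k1 lay unfolding rec_rel_def by blast
  also have "\<dots> = (\<Sum>m\<in>V - {l}. w l m / (lam - w l l) * u m)"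
    by (rule D_layer(2)[OF k1 lay])
  finally show ?thesis .
qed

lemma u_eq_U:
  assumes rr: "rec_rel n E w S lam uS u"
  shows "l \<in> V \<Longrightarrow> u l = U uS l"
proof (induction l rule: wf_induct[OF wf_r])
  case (1 l)
  show ?case
  proof (cases "l \<in> S")
    case True
    then show ?thesis using rr U_S by (simp add: rec_rel_def)
  next
    case False
    then have lS: "l \<in> V - S" using 1(2) by simp
    have "u l = (\<Sum>m\<in>V - {l}. w l m / (lam - w l l) * u m)" by (rule full_rec[OF rr lS])
    also have "\<dots> = (\<Sum>m\<in>V - {l}. w l m / (lam - w l l) * U uS m)"
    proof (rule sum.cong[OF refl])
      fix m assume m: "m \<in> V - {l}"
      show "w l m / (lam - w l l) * u m = w l m / (lam - w l l) * U uS m"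
      proof (cases "w l m = 0")
        case False
        then have e: "(l, m) \<in> E" by (rule w0')
        show ?thesis
        proof (cases "m \<in> S")
          case True
          then show ?thesis using rr U_S by (simp add: rec_rel_def)
        next
          case False
          then have "(m, l) \<in> r\<inverse>" using e m lS by (auto simp: r_def)
          then show ?thesis using 1(1) m by auto
        qed
      qed simp
    qed
    also have "\<dots> = U uS l" using U_step[OF lS] by simp
    finally show ?thesis .
  qed
qed

lemma existence: "rec_rel n E w S lam uS (\<lambda>i. if i \<in> V then U uS i else 0)"
  unfolding rec_rel_def
proof (intro conjI ballI allI impI)
  fix i assume "i \<in> S"
  then show "(if i \<in> V then U uS i else 0) = uS i" using SV U_S by auto
next
  fix k l assume k: "1 \<le> k" and lay: "l \<in> D k - D (k - 1)"
  have lS: "l \<in> V - S" by (rule D_layer(1)[OF k lay])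
  have "U uS l = (\<Sum>m\<in>V - {l}. w l m / (lam - w l l) * U uS m)" by (rule U_step[OF lS])
  also have "\<dots> = (\<Sum>m\<in>V - {l}. w l m / (lam - w l l) * (if m \<in> V then U uS m else 0))"
    by (rule sum.cong) auto
  also have "\<dots> = (\<Sum>j\<in>D (k - 1). w l j / (lam - w l l) * (if j \<in> V then U uS j else 0))"
    by (rule D_layer(2)[OF k lay, symmetric])
  finally show "(if l \<in> V then U uS l else 0) =
    (\<Sum>j\<in>D (k - 1). w l j / (lam - w l l) * (if j \<in> V then U uS j else 0))"
    using lS by simp
qed

lemma row_eq:
  assumes uS: "eigvec_on S (reduced_entry n E w S lam) lam uS"
    and rr: "rec_rel n E w S lam uS u" and l: "l \<in> V"
  shows "(\<Sum>m\<in>V. w l m * u m) = lam * u l"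
proof (cases "l \<in> S")
  case True
  have "(\<Sum>m\<in>V. w l m * u m) = (\<Sum>m\<in>V. w l m * U uS m)"
    by (rule sum.cong[OF refl]) (simp add: u_eq_U[OF rr])
  also have "\<dots> = (\<Sum>j\<in>S. reduced_entry n E w S lam l j * uS j)" using U_R[OF True] by simp
  also have "\<dots> = lam * uS l" using uS True by (simp add: eigvec_on_def)
  also have "\<dots> = lam * u l" using rr True by (simp add: rec_rel_def)
  finally show ?thesis .
next
  case False
  then have lS: "l \<in> V - S" using l by simp
  have c: "lam - w l l \<noteq> 0" using diag[OF lS] by simp
  have "u l = (\<Sum>m\<in>V - {l}. w l m / (lam - w l l) * u m)" by (rule full_rec[OF rr lS])
  also have "\<dots> = (\<Sum>m\<in>V - {l}. w l m * u m) / (lam - w l l)"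
    by (simp add: sum_divide_distrib)
  finally have e: "(lam - w l l) * u l = (\<Sum>m\<in>V - {l}. w l m * u m)" using c by (simp add: field_simps)
  have "(\<Sum>m\<in>V. w l m * u m) = w l l * u l + (\<Sum>m\<in>V - {l}. w l m * u m)"
    using l by (simp add: sum.remove)
  also have "\<dots> = lam * u l" using e by (simp add: algebra_simps)
  finally show ?thesis .
qed

lemma eigen:
  assumes uS: "eigvec_on S (reduced_entry n E w S lam) lam uS"
    and rr: "rec_rel n E w S lam uS u" and z: "\<forall>i. i \<notin> V \<longrightarrow> u i = 0"
  shows "eigenvector (adj_mat n w) (vec_of_fun n u) lam"
  unfolding eigenvector_def
proof (intro conjI)
  show "vec_of_fun n u \<in> carrier_vec (dim_row (adj_mat n w))"
    by (simp add: vec_of_fun_def adj_mat_def)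
  obtain i where i: "i \<in> S" "uS i \<noteq> 0" using uS by (auto simp: eigvec_on_def)
  then have iV: "i \<in> V" using SV by auto
  have i1: "i - 1 < n" "Suc (i - 1) = i" using iV by auto
  have "vec_of_fun n u $ (i - 1) = u i" unfolding vec_of_fun_def using i1 by (simp only: index_vec)
  moreover have "u i \<noteq> 0" using i rr by (simp add: rec_rel_def)
  ultimately show "vec_of_fun n u \<noteq> 0\<^sub>v (dim_row (adj_mat n w))"
    using iV by (auto simp: adj_mat_def vec_of_fun_def)
  show "adj_mat n w *\<^sub>v vec_of_fun n u = lam \<cdot>\<^sub>v vec_of_fun n u"
  proof (rule eq_vecI)
    show "dim_vec (adj_mat n w *\<^sub>v vec_of_fun n u) = dim_vec (lam \<cdot>\<^sub>v vec_of_fun n u)"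
      by (simp add: adj_mat_def vec_of_fun_def)
    fix k assume "k < dim_vec (lam \<cdot>\<^sub>v vec_of_fun n u)"
    then have k: "k < n" by (simp add: vec_of_fun_def)
    have "(adj_mat n w *\<^sub>v vec_of_fun n u) $ k = (\<Sum>j\<in>{0..<n}. w (Suc k) (Suc j) * u (Suc j))"
      using k by (simp add: adj_mat_def vec_of_fun_def scalar_prod_def)
    also have "\<dots> = (\<Sum>m\<in>{Suc 0..<Suc n}. w (Suc k) m * u m)"
      by (simp only: sum.shift_bounds_Suc_ivl)
    also have "{Suc 0..<Suc n} = V" by auto
    also have "(\<Sum>m\<in>V. w (Suc k) m * u m) = lam * u (Suc k)"
      by (rule row_eq[OF uS rr]) (use k in auto)
    also have "\<dots> = (lam \<cdot>\<^sub>v vec_of_fun n u) $ k" using k by (simp add: vec_of_fun_def)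
    finally show "(adj_mat n w *\<^sub>v vec_of_fun n u) $ k = (lam \<cdot>\<^sub>v vec_of_fun n u) $ k" .
  qed
qed

lemma main:
  assumes uS: "eigvec_on S (reduced_entry n E w S lam) lam uS"
  shows "(\<exists>!u. rec_rel n E w S lam uS u \<and> (\<forall>i. i \<notin> {1..n} \<longrightarrow> u i = 0))
    \<and> (\<forall>u. rec_rel n E w S lam uS u \<and> (\<forall>i. i \<notin> {1..n} \<longrightarrow> u i = 0) \<longrightarrow>
         eigenvector (adj_mat n w) (vec_of_fun n u) lam \<and> (\<forall>i\<in>S. u i = uS i))"
proof (intro conjI allI impI)
  let ?u = "\<lambda>i. if i \<in> V then U uS i else 0"
  show "\<exists>!u. rec_rel n E w S lam uS u \<and> (\<forall>i. i \<notin> {1..n} \<longrightarrow> u i = 0)"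
  proof (rule ex1I[of _ ?u])
    show "rec_rel n E w S lam uS ?u \<and> (\<forall>i. i \<notin> {1..n} \<longrightarrow> ?u i = 0)"
      using existence by simp
    fix u assume a: "rec_rel n E w S lam uS u \<and> (\<forall>i. i \<notin> {1..n} \<longrightarrow> u i = 0)"
    show "u = ?u"
    proof
      fix i show "u i = ?u i" using a u_eq_U[of uS u i] by auto
    qed
  qed
next
  fix u assume a: "rec_rel n E w S lam uS u \<and> (\<forall>i. i \<notin> {1..n} \<longrightarrow> u i = 0)"
  then show "eigenvector (adj_mat n w) (vec_of_fun n u) lam" using eigen[OF uS] by blast
  show "\<forall>i\<in>S. u i = uS i" using a by (simp add: rec_rel_def)
qed

end

theorem mainTheorem2:
  fixes n :: nat and E :: "(nat \<times> nat) set" and w :: "nat \<Rightarrow> nat \<Rightarrow> complex"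
    and lam :: complex and S :: "nat set" and uS :: "nat \<Rightarrow> complex"
  assumes G: "wdigraph n E w"
    and ev: "eigenvalue (adj_mat n w) lam"
    and S: "structural_set n E w lam S"
    and uS: "eigvec_on S (reduced_entry n E w S lam) lam uS"
  shows "(\<exists>!u. rec_rel n E w S lam uS u \<and> (\<forall>i. i \<notin> {1..n} \<longrightarrow> u i = 0))
    \<and> (\<forall>u. rec_rel n E w S lam uS u \<and> (\<forall>i. i \<notin> {1..n} \<longrightarrow> u i = 0) \<longrightarrow>
         eigenvector (adj_mat n w) (vec_of_fun n u) lam \<and> (\<forall>i\<in>S. u i = uS i))"
proof -
  interpret setting n E w lam S
    using G S by unfold_locales (auto simp: wdigraph_def structural_set_def)
  show ?thesis by (rule main[OF uS])
qed

end
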